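(* For every $n\ge1$, letting $k_n=\lceil\log_2 n\rceil$, $$c_n=\sum_{j=1}^{k_n-1}2^j\, s(2^{-j}n),$$ where $s(x)=\min_{z\in\mathbb{Z}}|x-z|$ is the distance from $x\in\mathbb{R}$ to the nearest integer.
   Context: Bifurcating trees: rooted trees in which every internal node has exactly two children; $\mathcal{T}_n$ is the set of isomorphism classes of bifurcating trees with $n$ leaves. For a node $w$, $\kappa_T(w)$ is its number of descendant leaves. The Colless index is $\mathcal{C}(T)=\sum_{v}|\kappa_T(v_1)-\kappa_T(v_2)|$, summed over internal nodes $v$ with children $v_1,v_2$; $c_n=\min\{\mathcal{C}(T):T\in\mathcal{T}_n\}$. *)

theory Defs
  imports "HOL-Analysis.Analysis"
begin

text \<open>The datatype is ordered;
  all notions below are invariant under swapping children, so minimising over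
  this datatype equals minimising over isomorphism classes.\<close>
datatype btree = Leaf | Node btree btree

fun leaves :: "btree \<Rightarrow> nat" where
  "leaves Leaf = 1"
| "leaves (Node l r) = leaves l + leaves r"

fun colless :: "btree \<Rightarrow> nat" where
  "colless Leaf = 0"
| "colless (Node l r) =
     nat \<bar>int (leaves l) - int (leaves r)\<bar> + colless l + colless r"

definition min_colless :: "nat \<Rightarrow> nat" where
  "min_colless n = Min {colless t | t. leaves t = n}"

definition dist_nearest_int :: "real \<Rightarrow> real" where
  "dist_nearest_int x = (INF z::int. \<bar>x - real_of_int z\<bar>)"

end

theory Submission
  imports Defs
begin

function g :: "nat \<Rightarrow> nat" where
  "g n = (if n \<le> 1 then 0 else g (n - n div 2) + g (n div 2) + n mod 2)"
  by pat_completeness auto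
termination by (relation "Wellfounded.measure id") auto

declare g.simps[simp del]

lemma g0: "g 0 = 0" by (simp add: g.simps)
lemma g1: "g 1 = 0" by (simp add: g.simps)
lemma g1s[simp]: "g (Suc 0) = 0" by (simp add: g.simps)

lemma g_even: "g (2*m) = 2 * g m"
proof (cases "m = 0")
  case True thus ?thesis by (simp add: g0)
next
  case False
  hence "g (2*m) = g (2*m - m) + g m + 0" using g.simps[of "2*m"] by simp
  thus ?thesis by simp
qed

lemma g_odd: "m \<ge> 1 \<Longrightarrow> g (2*m+1) = g m + g (m+1) + 1"
  using g.simps[of "2*m+1"] by simp

lemma g_odd': "int (g (2*p+1)) = int (g p) + int (g (p+1)) + 1 - (if p = 0 then 1 else 0)"
proof (cases "p = 0")
  case True thus ?thesis by (simp add: g0 g1)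
next
  case False thus ?thesis using g_odd[of p] by simp
qed

lemma g_sub: "int (g (a+b)) \<le> int (g a) + int (g b) + \<bar>int a - int b\<bar>"
proof (induction "a+b" arbitrary: a b rule: less_induct)
  case less
  have IH: "int (g (x+y)) \<le> int (g x) + int (g y) + \<bar>int x - int y\<bar>" if "x + y < a + b" for x y
    using less that by blast
  have eo: "int (g (x+y)) \<le> int (g x) + int (g y) + \<bar>int x - int y\<bar>"
    if "even x" "odd y" "x + y = a + b" for x y
  proof -
    obtain p where p: "x = 2*p" using \<open>even x\<close> by blast
    obtain q where q: "y = 2*q+1" using \<open>odd y\<close> oddE by blast
    show ?thesis
    proof (cases "p = 0")
      case True then show ?thesis using p q by (simp add: g0)
    next
      case pos: False
      have e: "x + y = 2*(p+q)+1" using p q by simp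
      have ge: "g (x+y) = g (p+q) + g(p+q+1) + 1" using g_odd[of "p+q"] pos e by simp
      have gx: "g x = 2 * g p" using p g_even by simp
      show ?thesis
      proof (cases "q = 0")
        case True
        have ih: "int (g (p+1)) \<le> int (g p) + int (g 1) + \<bar>int p - int 1\<bar>"
          using IH[of p 1] pos e that(3) True by simp
        then show ?thesis using ge gx p q True g1 pos by (auto simp: abs_if split: if_splits)
      next
        case False
        have ih1: "int (g (p+q)) \<le> int (g p) + int (g q) + \<bar>int p - int q\<bar>"
          using IH[of p q] pos e that(3) by simp
        have ih2: "int (g (p+(q+1))) \<le> int (g p) + int (g (q+1)) + \<bar>int p - int (q+1)\<bar>"
          using IH[of p "q+1"] pos e that(3) by simp
        have gy: "g y = g q + g (q+1) + 1" using g_odd[of q] False q by simp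
        show ?thesis using ge gx gy ih1 ih2 p q by (auto simp: abs_if split: if_splits)
      qed
    qed
  qed
  show ?case
  proof (cases "even a")
    case ea: True
    show ?thesis
    proof (cases "even b")
      case eb: True
      obtain p where p: "a = 2*p" using ea by blast
      obtain q where q: "b = 2*q" using eb by blast
      show ?thesis
      proof (cases "p + q = 0")
        case True thus ?thesis using p q by (simp add: g0)
      next
        case False
        have ih: "int (g (p+q)) \<le> int (g p) + int (g q) + \<bar>int p - int q\<bar>"
          using IH[of p q] False p q by force
        have "a + b = 2*(p+q)" using p q by simp
        thus ?thesis using ih p q g_even[of "p+q"] g_even[of p] g_even[of q] by (auto simp: abs_if split: if_splits)
      qed
    next
      case False
      thus ?thesis using eo[of a b] ea by simp
    qed
  next
    case oa: False
    show ?thesis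
    proof (cases "even b")
      case eb: True
      thus ?thesis using eo[of b a] oa by (simp add: add.commute abs_minus_commute)
    next
      case ob: False
      obtain p where p: "a = 2*p+1" using oa oddE by blast
      obtain q where q: "b = 2*q+1" using ob oddE by blast
      have ab: "a + b = 2*(p+q+1)" using p q by simp
      show ?thesis
      proof (cases "p = 0 \<and> q = 0")
        case True thus ?thesis using p q g_even[of 1] by (simp add: g1 numeral_2_eq_2)
      next
        case False
        have ih1: "int (g ((p+1)+q)) \<le> int (g (p+1)) + int (g q) + \<bar>int (p+1) - int q\<bar>"
          using IH[of "p+1" q] ab by simp
        have ih2: "int (g (p+(q+1))) \<le> int (g p) + int (g (q+1)) + \<bar>int p - int (q+1)\<bar>"
          using IH[of p "q+1"] ab by simp
        have "g (a+b) = 2 * g (p+q+1)" using ab g_even[of "p+q+1"] by simp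
        thus ?thesis using ih1 ih2 p q g_odd'[of p] g_odd'[of q] False
          by (auto simp: abs_if split: if_splits)
      qed
    qed
  qed
qed


lemma leaves_pos: "leaves t \<ge> 1" by (induction t) auto

lemma colless_ge: "g (leaves t) \<le> colless t"
proof (induction t)
  case Leaf thus ?case by (simp add: g1)
next
  case (Node l r)
  have "int (g (leaves l + leaves r)) \<le> int (g (leaves l)) + int (g (leaves r)) + \<bar>int (leaves l) - int (leaves r)\<bar>"
    by (rule g_sub)
  thus ?case using Node by simp
qed

lemma colless_le: "colless t \<le> leaves t * leaves t"
proof (induction t)
  case Leaf thus ?case by simp
next
  case (Node l r)
  define a where "a = leaves l"
  define b where "b = leaves r"
  have a1: "a \<ge> 1" "b \<ge> 1" using leaves_pos a_def b_def by auto
  have "nat \<bar>int a - int b\<bar> \<le> a + b" by simp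
  also have "a + b \<le> 2*a*b" using a1 by (metis add_mono mult_2 mult.assoc mult.commute mult_le_mono2 mult_1_right mult_le_mono1 nat_mult_1)
  finally have "nat \<bar>int a - int b\<bar> \<le> 2*a*b" .
  hence "nat \<bar>int a - int b\<bar> + a*a + b*b \<le> (a+b)*(a+b)" by (simp add: algebra_simps)
  thus ?case using Node a_def b_def by simp
qed

function bal :: "nat \<Rightarrow> btree" where
  "bal n = (if n \<le> 1 then Leaf else Node (bal (n - n div 2)) (bal (n div 2)))"
  by pat_completeness auto
termination by (relation "Wellfounded.measure id") auto

declare bal.simps[simp del]

lemma bal: "n \<ge> 1 \<Longrightarrow> leaves (bal n) = n \<and> colless (bal n) = g n"
proof (induction n rule: less_induct)
  case (less n)
  show ?case
  proof (cases "n \<le> 1")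
    case True
    hence "n = 1" using less.prems by simp
    thus ?thesis by (simp add: bal.simps g1)
  next
    case False
    have h1: "leaves (bal (n - n div 2)) = n - n div 2 \<and> colless (bal (n - n div 2)) = g (n - n div 2)"
      using less.IH[of "n - n div 2"] False by simp
    have h2: "leaves (bal (n div 2)) = n div 2 \<and> colless (bal (n div 2)) = g (n div 2)"
      using less.IH[of "n div 2"] False by simp
    have b: "bal n = Node (bal (n - n div 2)) (bal (n div 2))" using False bal.simps[of n] by simp
    have gn: "g n = g (n - n div 2) + g (n div 2) + n mod 2" using False g.simps[of n] by simp
    have "n - n div 2 = n div 2 + n mod 2" using div_mult_mod_eq[of n 2] by arith
    hence "nat \<bar>int (n - n div 2) - int (n div 2)\<bar> = n mod 2" by simp
    thus ?thesis using b h1 h2 gn by simp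
  qed
qed

lemma min_colless_g: "n \<ge> 1 \<Longrightarrow> min_colless n = g n"
proof -
  assume n: "n \<ge> 1"
  let ?A = "{colless t | t. leaves t = n}"
  have fin: "finite ?A"
  proof (rule finite_subset)
    show "?A \<subseteq> {..n*n}" using colless_le by auto
  qed simp
  show ?thesis unfolding min_colless_def
  proof (rule Min_eqI[OF fin])
    show "g n \<in> ?A" using bal[OF n] by (metis (mono_tags, lifting) mem_Collect_eq)
  next
    fix y assume "y \<in> ?A"
    then obtain t where "y = colless t" "leaves t = n" by blast
    thus "g n \<le> y" using colless_ge by blast
  qed
qed


lemma dni: "dist_nearest_int x = min (x - of_int \<lfloor>x\<rfloor>) (of_int \<lfloor>x\<rfloor> + 1 - x)"
  unfolding dist_nearest_int_def
proof (rule cInf_eq_minimum)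
  have a: "x - of_int \<lfloor>x\<rfloor> \<ge> 0" "of_int \<lfloor>x\<rfloor> + 1 - x \<ge> 0" by linarith+
  show "min (x - of_int \<lfloor>x\<rfloor>) (of_int \<lfloor>x\<rfloor> + 1 - x) \<in> range (\<lambda>z::int. \<bar>x - of_int z\<bar>)"
  proof (cases "x - of_int \<lfloor>x\<rfloor> \<le> of_int \<lfloor>x\<rfloor> + 1 - x")
    case True
    hence "min (x - of_int \<lfloor>x\<rfloor>) (of_int \<lfloor>x\<rfloor> + 1 - x) = \<bar>x - of_int \<lfloor>x\<rfloor>\<bar>" using a by simp
    thus ?thesis by blast
  next
    case False
    hence "min (x - of_int \<lfloor>x\<rfloor>) (of_int \<lfloor>x\<rfloor> + 1 - x) = \<bar>x - of_int (\<lfloor>x\<rfloor>+1)\<bar>" using a by simp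
    thus ?thesis by blast
  qed
next
  fix y assume "y \<in> range (\<lambda>z::int. \<bar>x - of_int z\<bar>)"
  then obtain z where z: "y = \<bar>x - of_int z\<bar>" by blast
  show "min (x - of_int \<lfloor>x\<rfloor>) (of_int \<lfloor>x\<rfloor> + 1 - x) \<le> y"
  proof (cases "z \<le> \<lfloor>x\<rfloor>")
    case True
    hence "real_of_int z \<le> of_int \<lfloor>x\<rfloor>" by linarith
    thus ?thesis using z by linarith
  next
    case False
    hence "real_of_int z \<ge> of_int \<lfloor>x\<rfloor> + 1" by linarith
    thus ?thesis using z by linarith
  qed
qed

definition d :: "nat \<Rightarrow> nat \<Rightarrow> nat" where
  "d j n = min (n mod 2^j) (2^j - n mod 2^j)"

lemma d_real: "2 ^ j * dist_nearest_int (real n / 2 ^ j) = real (d j n)"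
proof -
  define M :: nat where "M = 2^j"
  have M: "M > 0" unfolding M_def by simp
  have fl: "\<lfloor>real n / real M\<rfloor> = int (n div M)" using floor_divide_of_nat_eq[of n M] by simp
  have nn: "real n = real M * real (n div M) + real (n mod M)"
    by (metis div_mult_mod_eq of_nat_add of_nat_mult mult.commute)
  have lt: "n mod M < M" using M by simp
  have e1: "real M * (real n / real M - real (n div M)) = real (n mod M)"
    using M nn by (simp add: field_simps)
  have e2: "real M * (real (n div M) + 1 - real n / real M) = real (M - n mod M)"
    using M nn lt by (simp add: field_simps of_nat_diff)
  have "real M * dist_nearest_int (real n / real M)
        = min (real M * (real n / real M - real (n div M))) (real M * (real (n div M) + 1 - real n / real M))"
    unfolding dni fl using M by (simp add: min_mult_distrib_left)
  also have "\<dots> = min (real (n mod M)) (real (M - n mod M))" by (simp only: e1 e2)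
  also have "\<dots> = real (d j n)" unfolding d_def M_def[symmetric] by (simp add: of_nat_min)
  finally show ?thesis unfolding M_def by simp
qed


definition clog :: "nat \<Rightarrow> nat" where "clog n = nat \<lceil>log 2 (real n)\<rceil>"

lemma clog_unique:
  assumes "m \<le> 2^K" "2^K < 2*m"
  shows "clog m = K"
proof (cases K)
  case 0
  hence "m = 1" using assms by simp
  thus ?thesis using 0 by (simp add: clog_def)
next
  case (Suc K')
  have m0: "m > 0" using assms by simp
  have "2^K' < m" using assms Suc by simp
  hence l1: "real K' < log 2 (real m)" using less_log2_of_power by blast
  have l2: "log 2 (real m) \<le> real K" using log2_of_power_le[OF assms(1) m0] .
  have "\<lceil>log 2 (real m)\<rceil> = int K"
    by (rule ceiling_unique) (use l1 l2 Suc in auto)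
  thus ?thesis by (simp add: clog_def)
qed

lemma clog_ex:
  assumes "m \<ge> 1"
  shows "m \<le> 2^(clog m) \<and> 2^(clog m) < 2*m"
proof -
  define x where "x = log 2 (real m)"
  have x0: "x \<ge> 0" using assms x_def by simp
  have c: "real (clog m) = of_int \<lceil>x\<rceil>" using x0 by (simp add: clog_def x_def)
  have "x \<le> real (clog m)" using c by linarith
  hence "real m \<le> 2 powr real (clog m)" using assms unfolding x_def by (simp add: log_le_iff)
  hence A: "m \<le> 2^(clog m)" by (simp add: powr_realpow)
  have "real (clog m) - 1 < x" using c by linarith
  hence "2 powr (real (clog m) - 1) < real m" using assms unfolding x_def by (simp add: less_log_iff)
  hence "2 powr (real (clog m)) < 2 * real m" by (simp add: powr_diff)
  hence "real (2^(clog m)) < real (2*m)" by (simp add: powr_realpow)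
  hence B: "2^(clog m) < 2*m" by (simp only: of_nat_less_iff)
  show ?thesis using A B by simp
qed

lemma minar: "min (2*r) (2*M - 2*r) = 2 * min r (M - (r::nat))"
  by (simp add: min_def) arith

lemma d_even: "d (Suc j) (2*m) = 2 * d j m"
proof -
  have "(2*m) mod 2^Suc j = 2 * (m mod 2^j)" by (simp add: mod_mult_mult1)
  moreover have "(2::nat)^Suc j = 2 * 2^j" by simp
  ultimately show ?thesis unfolding d_def by (simp only: minar)
qed

lemma d1_even: "d 1 (2*m) = 0" unfolding d_def by simp
lemma d1_odd: "d 1 (2*m+1) = 1" unfolding d_def by simp

lemma mod_odd: "(M::nat) > 0 \<Longrightarrow> (2*m+1) mod (2*M) = 2*(m mod M) + 1"
proof -
  assume M: "M > 0"
  have "m = M*(m div M) + m mod M" by simp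
  hence e: "2*m+1 = 2*(M*(m div M)) + (2*(m mod M)+1)" by arith
  have "m mod M < M" using M by simp
  hence lt: "2*(m mod M)+1 < 2*M" by arith
  show ?thesis
  proof (rule mod_nat_eqI)
    show "2*(m mod M)+1 < 2*M" by (rule lt)
    show "2*(m mod M)+1 \<le> 2*m+1" using e by linarith
    have "2*m+1 - (2*(m mod M)+1) = 2*(M*(m div M))" using e by linarith
    also have "\<dots> = (2*M)*(m div M)" by simp
    finally show "2*M dvd 2*m+1 - (2*(m mod M)+1)" by simp
  qed
qed

lemma oddar:
  assumes "r < M" "M = 2*(h::nat)"
  shows "min (2*r+1) (2*M-(2*r+1)) = min r (M-r) + (if r+1 = M then 0 else min (r+1) (M - (r+1)))"
proof (cases "2*r+2 \<le> M")
  case True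
  have "r + 1 \<noteq> M" using True by linarith
  moreover have "min (2*r+1) (2*M-(2*r+1)) = 2*r+1" using True by linarith
  moreover have "min r (M-r) = r" using True by linarith
  moreover have "min (r+1) (M - (r+1)) = r+1" using True by linarith
  ultimately show ?thesis by simp
next
  case False
  hence F: "2*r \<ge> M" using assms(2) by presburger
  have A: "min (2*r+1) (2*M-(2*r+1)) = 2*M-(2*r+1)" using F assms(1) by linarith
  have B: "min r (M-r) = M - r" using F by linarith
  show ?thesis
  proof (cases "r + 1 = M")
    case True show ?thesis unfolding A B if_P[OF True] using True by linarith
  next
    case False
    have C: "min (r+1) (M - (r+1)) = M - (r+1)" using F by linarith
    show ?thesis unfolding A B C if_not_P[OF False] using False assms(1) by linarith
  qed
qed

lemma d_odd: "j \<ge> 1 \<Longrightarrow> d (Suc j) (2*m+1) = d j m + d j (m+1)"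
proof -
  assume j: "j \<ge> 1"
  define M :: nat where "M = 2^j"
  obtain j' where j': "j = Suc j'" using j by (cases j) auto
  define h :: nat where "h = 2^j'"
  have h: "M = 2*h" "h \<ge> 1" unfolding M_def h_def j' by simp_all
  have M0: "M > 0" using h by simp
  define r where "r = m mod M"
  have r: "r < M" using M0 r_def by simp
  have a: "(2*m+1) mod (2*M) = 2*r+1" using mod_odd[OF M0] r_def by simp
  have b: "(m+1) mod M = (if r + 1 = M then 0 else r+1)" using mod_Suc[of m M] r_def by simp
  have L: "d (Suc j) (2*m+1) = min (2*r+1) (2*M - (2*r+1))" unfolding d_def M_def[symmetric] using a M_def by simp
  have R: "d j m + d j (m+1) = min r (M - r) + min ((m+1) mod M) (M - (m+1) mod M)"
    unfolding d_def M_def[symmetric] r_def by simp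
  have c: "min ((m+1) mod M) (M - (m+1) mod M) = (if r+1 = M then 0 else min (r+1) (M-(r+1)))"
    using b by (cases "r+1 = M") simp_all
  show ?thesis by (simp only: L R c oddar[OF r h(1)])
qed


definition S :: "nat \<Rightarrow> nat" where "S n = (\<Sum>j = 1..clog n - 1. d j n)"

lemma d0[simp]: "d 0 m = 0" by (simp add: d_def)

lemma sum_split1: "(\<Sum>j=1..Suc K. f j) = f 1 + (\<Sum>i=1..K. f (Suc i))" for f :: "nat \<Rightarrow> nat"
proof -
  have "(\<Sum>j=1..Suc K. f j) = f 1 + (\<Sum>j=Suc 1..Suc K. f j)" by (rule sum.atLeast_Suc_atMost) simp
  also have "(\<Sum>j=Suc 1..Suc K. f j) = (\<Sum>i=1..K. f (Suc i))" by (rule sum.shift_bounds_cl_Suc_ivl)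
  finally show ?thesis .
qed

lemma S1: "S 1 = 0"
proof -
  have "clog 1 = 0" by (rule clog_unique) simp_all
  thus ?thesis by (simp add: S_def)
qed

lemma S_even:
  assumes m: "m \<ge> 1"
  shows "S (2*m) = 2 * S m"
proof -
  define K where "K = clog m"
  have K: "m \<le> 2^K" "2^K < 2*m" using clog_ex[OF m] K_def by auto
  have c2: "clog (2*m) = Suc K" by (rule clog_unique) (use K in auto)
  show ?thesis
  proof (cases K)
    case 0
    thus ?thesis by (simp add: S_def c2 K_def[symmetric])
  next
    case (Suc K')
    have "S (2*m) = (\<Sum>j=1..Suc K'. d j (2*m))" by (simp add: S_def c2 Suc)
    also have "\<dots> = d 1 (2*m) + (\<Sum>i=1..K'. d (Suc i) (2*m))" by (rule sum_split1)
    also have "\<dots> = (\<Sum>i=1..K'. 2 * d i m)" by (simp add: d1_even d_even)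
    also have "\<dots> = 2 * S m" by (simp add: S_def K_def[symmetric] Suc sum_distrib_left)
    finally show ?thesis .
  qed
qed

lemma d_pow: "d k (2^k) = 0" by (simp add: d_def)

lemma S_odd:
  assumes m: "m \<ge> 1"
  shows "S (2*m+1) = S m + S (m+1) + 1"
proof -
  define K where "K = clog (m+1)"
  have K: "m+1 \<le> 2^K" "2^K < 2*(m+1)" using clog_ex[of "m+1"] K_def by auto
  obtain K' where K': "K = Suc K'" using K m by (cases K) auto
  have pK': "2^K' \<le> m" using K(2) K' by simp
  have c2: "clog (2*m+1) = Suc K" by (rule clog_unique) (use K K' pK' in auto)
  have Sm1: "S (m+1) = (\<Sum>i=1..K'. d i (m+1))" unfolding S_def K_def[symmetric] K' by simp
  have Sm: "S m = (\<Sum>i=1..K'. d i m)"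
  proof (cases "2^K' < m")
    case True
    have "clog m = K" by (rule clog_unique) (use K K' True in auto)
    thus ?thesis by (simp add: S_def K')
  next
    case False
    hence mp: "m = 2^K'" using pK' by simp
    have cm: "clog m = K'" by (rule clog_unique) (use mp m in auto)
    show ?thesis
    proof (cases K')
      case 0 thus ?thesis by (simp add: S_def cm)
    next
      case (Suc K'')
      have "(\<Sum>i=1..K'. d i m) = (\<Sum>i=1..K''. d i m) + d K' m" by (simp add: Suc)
      also have "d K' m = 0" using mp d_pow by simp
      finally show ?thesis by (simp add: S_def cm Suc)
    qed
  qed
  have "S (2*m+1) = (\<Sum>j=1..Suc K'. d j (2*m+1))" unfolding S_def c2 K' by (simp only: diff_Suc_1)
  also have "\<dots> = d 1 (2*m+1) + (\<Sum>i=1..K'. d (Suc i) (2*m+1))" by (rule sum_split1)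
  also have "(\<Sum>i=1..K'. d (Suc i) (2*m+1)) = (\<Sum>i=1..K'. d i m + d i (m+1))"
    by (rule sum.cong) (use d_odd in auto)
  also have "\<dots> = S m + S (m+1)" unfolding Sm Sm1 by (rule sum.distrib)
  finally show ?thesis using d1_odd by simp
qed

lemma g_S: "n \<ge> 1 \<Longrightarrow> g n = S n"
proof (induction n rule: less_induct)
  case (less n)
  show ?case
  proof (cases "n = 1")
    case True thus ?thesis using S1 by simp
  next
    case False
    hence n2: "n \<ge> 2" using less.prems by simp
    show ?thesis
    proof (cases "even n")
      case True
      then obtain m where m: "n = 2*m" by blast
      have m1: "m \<ge> 1" "m < n" using m n2 by auto
      have "g m = S m" using less.IH[OF m1(2) m1(1)] .
      thus ?thesis using m g_even S_even[OF m1(1)] by simp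
    next
      case False
      then obtain m where m: "n = 2*m+1" using oddE by blast
      have m1: "m \<ge> 1" "m < n" "m + 1 < n" "m + 1 \<ge> 1" using m n2 by auto
      have "g m = S m" using less.IH[OF m1(2) m1(1)] .
      moreover have "g (m+1) = S (m+1)" using less.IH[OF m1(3) m1(4)] .
      ultimately show ?thesis using m g_odd[OF m1(1)] S_odd[OF m1(1)] by simp
    qed
  qed
qed

theorem theorem3:
  fixes n :: nat
  assumes "n \<ge> 1"
  shows "real (min_colless n) =
    (\<Sum>j = 1..nat \<lceil>log 2 (real n)\<rceil> - 1.
        2 ^ j * dist_nearest_int (real n / 2 ^ j))"
proof -
  have "real (min_colless n) = real (S n)" using min_colless_g[OF assms] g_S[OF assms] by simp
  also have "\<dots> = (\<Sum>j = 1..clog n - 1. real (d j n))" by (simp add: S_def)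
  also have "\<dots> = (\<Sum>j = 1..clog n - 1. 2 ^ j * dist_nearest_int (real n / 2 ^ j))"
    by (rule sum.cong) (simp_all add: d_real)
  finally show ?thesis by (simp add: clog_def)
qed

end
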